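(* Let $\pi_\theta$ be a parametrized policy with $\pi_\theta(a\mid s)>0$ differentiable in $\theta$ for all $(s,a)$, and let $P_\nu$ be an encoding matrix of full row rank. Define $P_U^{\theta}=P_\nu P_{\mathcal{S}}^{\pi_\theta}P_\nu^{\dagger}$, assume the spectral radius of $\gamma P_U^{\theta}$ is less than $1$, and define the abstract value function $V_U^{\theta}=(I-\gamma P_U^{\theta})^{-1}P_\nu R_{\mathcal{S}}^{\pi_\theta}$. Let $\eta(x\mid u)=\sum_{t=0}^{\infty}\gamma^t\big((P_U^{\theta})^t\big)_{u,x}$ for $u,x\in U$ and $P_1(u'\mid s,a)=\sum_{s'\in\mathcal{S}}P_{\mathcal{S}\mathcal{A}}(s'\mid s,a)\,P_\nu^{\dagger}(s',u')$. Then for every $u\in U$, $$\nabla_\theta V_U^{\theta}(u)=\sum_{x\in U}\eta(x\mid u)\sum_{s\in\mathcal{S}}\nu(s\mid x)\sum_{a\in\mathcal{A}}\pi_\theta(a\mid s)\,\nabla_\theta\ln\pi_\theta(a\mid s)\Big[r(s,a)+\gamma\sum_{u'\in U}P_1(u'\mid s,a)\,V_U^{\theta}(u')\Big].$$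
   Context: Ground MDP with finite $\mathcal{S},\mathcal{A}$, transition probabilities $P_{\mathcal{S}\mathcal{A}}(s'\mid s,a)$, reward $r$, discount $\gamma\in(0,1)$. $P_{\mathcal{S}}^{\pi}(s,s')=\sum_a\pi(a\mid s)P_{\mathcal{S}\mathcal{A}}(s'\mid s,a)$, $R_{\mathcal{S}}^{\pi}(s)=\sum_a\pi(a\mid s)r(s,a)$. The encoding matrix $P_\nu\in\mathbb{R}^{|U|\times|\mathcal{S}|}$ has $(u,s)$ entry $\nu(s\mid u)$, each row a probability distribution on $\mathcal{S}$, $U$ a finite abstract state set. $P_\nu^{\dagger}=P_\nu^\top(P_\nu P_\nu^\top)^{-1}\in\mathbb{R}^{|\mathcal{S}|\times|U|}$, and $P_\nu^{\dagger}(s',u')$ denotes its $(s',u')$ entry. *)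

theory Defs
  imports "HOL-Analysis.Analysis"
begin

text \<open>Matrices are HOL-Analysis matrices: A :: real^'c^'r has entry A$i$j (row i, column j).\<close>

definition matpow :: "real^'n^'n \<Rightarrow> nat \<Rightarrow> real^'n^'n" where
  "matpow A t = (((**) A) ^^ t) (mat 1)"

definition spectral_radius :: "real^'n^'n \<Rightarrow> real" where
  "spectral_radius A =
     Max {cmod l | l. \<exists>v::complex^'n. v \<noteq> 0 \<and>
            (\<chi> i j. complex_of_real (A$i$j)) *v v = l *s v}"

definition pinv :: "real^'s^'u \<Rightarrow> real^'u^'s" where
  "pinv M = transpose M ** matrix_inv (M ** transpose M)"

definition PS :: "('s::finite \<Rightarrow> 'a::finite \<Rightarrow> 's \<Rightarrow> real) \<Rightarrow> ('s \<Rightarrow> 'a \<Rightarrow> real) \<Rightarrow> real^'s^'s" where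
  "PS P pol = (\<chi> s s'. \<Sum>a\<in>UNIV. pol s a * P s a s')"

definition RS :: "('s::finite \<Rightarrow> 'a::finite \<Rightarrow> real) \<Rightarrow> ('s \<Rightarrow> 'a \<Rightarrow> real) \<Rightarrow> real^'s" where
  "RS r pol = (\<chi> s. \<Sum>a\<in>UNIV. pol s a * r s a)"

definition PU :: "real^'s::finite^'u::finite \<Rightarrow> ('s \<Rightarrow> 'a::finite \<Rightarrow> 's \<Rightarrow> real) \<Rightarrow> ('s \<Rightarrow> 'a \<Rightarrow> real) \<Rightarrow> real^'u^'u" where
  "PU Pnu P pol = Pnu ** PS P pol ** pinv Pnu"

definition VU :: "real \<Rightarrow> real^'s::finite^'u::finite \<Rightarrow> ('s \<Rightarrow> 'a::finite \<Rightarrow> 's \<Rightarrow> real) \<Rightarrow> ('s \<Rightarrow> 'a \<Rightarrow> real)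
                   \<Rightarrow> ('s \<Rightarrow> 'a \<Rightarrow> real) \<Rightarrow> real^'u" where
  "VU \<gamma> Pnu P r pol = matrix_inv (mat 1 - \<gamma> *\<^sub>R PU Pnu P pol) *v (Pnu *v RS r pol)"

definition eta :: "real \<Rightarrow> real^'u^'u \<Rightarrow> 'u \<Rightarrow> 'u \<Rightarrow> real" where
  "eta \<gamma> A x u = (\<Sum>t. \<gamma>^t * (matpow A t)$u$x)"

definition P1 :: "real^'s::finite^'u::finite \<Rightarrow> ('s \<Rightarrow> 'a \<Rightarrow> 's \<Rightarrow> real) \<Rightarrow> 'u \<Rightarrow> 's \<Rightarrow> 'a \<Rightarrow> real" where
  "P1 Pnu P u' s a = (\<Sum>s'\<in>UNIV. P s a s' * (pinv Pnu)$s'$u')"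

end

theory Submission imports Defs "Jordan_Normal_Form.Jordan_Normal_Form_Existence"
begin
no_notation Matrix.vec_index (infixl "$" 100)
no_notation Matrix.scalar_prod (infix "\<bullet>" 70)
hide_const (open) Matrix.mat Matrix.row Matrix.vec Determinant.det

definition toJ :: "(nat \<Rightarrow> 'n) \<Rightarrow> real^'n^'n \<Rightarrow> complex mat" where
  "toJ h X = Matrix.mat CARD('n) CARD('n) (\<lambda>(i,j). complex_of_real (X $ h i $ h j))"

lemma toJ_carrier: "toJ h (X::real^'n::finite^'n) \<in> carrier_mat CARD('n) CARD('n)"
  by (simp add: toJ_def)

lemma toJ_mult:
  fixes X Y :: "real^'n::finite^'n"
  assumes h: "bij_betw h {0..<CARD('n)} UNIV"
  shows "toJ h (X ** Y) = toJ h X * toJ h Y"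
proof (rule eq_matI)
  fix i j assume i: "i < dim_row (toJ h X * toJ h Y)" and j: "j < dim_col (toJ h X * toJ h Y)"
  hence i': "i < CARD('n)" and j': "j < CARD('n)" by (auto simp: toJ_def)
  have "(toJ h X * toJ h Y) $$ (i,j) = (\<Sum>k\<in>{0..<CARD('n)}. complex_of_real (X $ h i $ h k * Y $ h k $ h j))"
    using i' j' by (simp add: toJ_def scalar_prod_def)
  also have "\<dots> = (\<Sum>v\<in>UNIV. complex_of_real (X $ h i $ v * Y $ v $ h j))"
    by (rule sum.reindex_bij_betw[OF h])
  also have "\<dots> = toJ h (X ** Y) $$ (i,j)"
    using i' j' by (simp add: toJ_def matrix_matrix_mult_def)
  finally show "toJ h (X ** Y) $$ (i,j) = (toJ h X * toJ h Y) $$ (i,j)" by simp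
qed (auto simp: toJ_def)

lemma toJ_one:
  assumes h: "bij_betw h {0..<CARD('n::finite)} (UNIV::'n set)"
  shows "toJ h (mat 1 :: real^'n^'n) = 1\<^sub>m CARD('n)"
proof (rule eq_matI)
  fix i j assume i: "i < dim_row (1\<^sub>m CARD('n))" and j: "j < dim_col (1\<^sub>m CARD('n))"
  hence i': "i < CARD('n)" and j': "j < CARD('n)" by auto
  have "(h i = h j) = (i = j)" using h i' j' unfolding bij_betw_def inj_on_def by auto
  thus "toJ h (mat 1 :: real^'n^'n) $$ (i,j) = 1\<^sub>m CARD('n) $$ (i,j)"
    using i' j' by (simp add: toJ_def Finite_Cartesian_Product.mat_def)
qed (auto simp: toJ_def)

lemma matpow_Suc': "matpow A (Suc k) = matpow A k ** A"
proof (induction k)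
  case 0 thus ?case by (simp add: matpow_def)
next
  case (Suc k)
  have "matpow A (Suc (Suc k)) = A ** matpow A (Suc k)" by (simp add: matpow_def)
  also have "\<dots> = A ** (matpow A k ** A)" using Suc by simp
  also have "\<dots> = (A ** matpow A k) ** A" by (simp add: matrix_mul_assoc)
  also have "A ** matpow A k = matpow A (Suc k)" by (simp add: matpow_def)
  finally show ?case .
qed

lemma toJ_pow:
  fixes X :: "real^'n::finite^'n"
  assumes h: "bij_betw h {0..<CARD('n)} UNIV"
  shows "toJ h (matpow X k) = toJ h X ^\<^sub>m k"
proof (induction k)
  case 0 thus ?case using toJ_one[OF h] by (simp add: matpow_def toJ_def)
next
  case (Suc k) thus ?case by (simp add: matpow_Suc' toJ_mult[OF h])
qed

definition cplx :: "real^'n^'m \<Rightarrow> complex^'n^'m" where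
  "cplx X = (\<chi> i j. complex_of_real (X$i$j))"

lemma eig_J_to_vec:
  fixes X :: "real^'n::finite^'n"
  assumes h: "bij_betw h {0..<CARD('n)} UNIV"
    and ev: "eigenvector (toJ h X) v l"
  shows "\<exists>w::complex^'n. w \<noteq> 0 \<and> cplx X *v w = l *s w"
proof -
  let ?n = "CARD('n)"
  define g where "g = inv_into {0..<?n} h"
  have hg: "h (g u) = u" for u using h unfolding g_def bij_betw_def
    by (simp add: f_inv_into_f)
  have gl: "g u < ?n" for u using h unfolding g_def bij_betw_def
    by (metis atLeastLessThan_iff inv_into_into iso_tuple_UNIV_I)
  have gh: "i < ?n \<Longrightarrow> g (h i) = i" for i using h unfolding g_def bij_betw_def
    by (simp add: inv_into_f_f)
  have vc: "v \<in> carrier_vec ?n" and vnz: "v \<noteq> 0\<^sub>v ?n" and eq: "toJ h X *\<^sub>v v = l \<cdot>\<^sub>v v"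
    using ev unfolding eigenvector_def by (auto simp: toJ_def)
  define w where "w = (\<chi> u. Matrix.vec_index v (g u))"
  have "cplx X *v w = l *s w"
  proof (subst Finite_Cartesian_Product.vec_eq_iff, intro allI)
    fix u
    have "(cplx X *v w) $ u = (\<Sum>y\<in>UNIV. complex_of_real (X $ u $ y) * Matrix.vec_index v (g y))"
      by (simp add: cplx_def w_def matrix_vector_mult_def)
    also have "\<dots> = (\<Sum>k\<in>{0..<?n}. complex_of_real (X $ u $ h k) * Matrix.vec_index v (g (h k)))"
      by (rule sum.reindex_bij_betw[OF h, symmetric])
    also have "\<dots> = (\<Sum>k\<in>{0..<?n}. complex_of_real (X $ h (g u) $ h k) * Matrix.vec_index v k)"
      by (rule sum.cong) (auto simp: gh hg)
    also have "\<dots> = Matrix.vec_index (toJ h X *\<^sub>v v) (g u)"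
      using gl vc by (simp add: toJ_def scalar_prod_def)
    also have "\<dots> = l * Matrix.vec_index v (g u)" using eq gl vc by simp
    finally show "(cplx X *v w) $ u = (l *s w) $ u" by (simp add: w_def)
  qed
  moreover have "w \<noteq> 0"
  proof
    assume w0: "w = 0"
    have "v = 0\<^sub>v ?n"
    proof (rule eq_vecI)
      fix i assume "i < dim_vec (0\<^sub>v ?n)"
      hence i: "i < ?n" by simp
      have "Matrix.vec_index v i = w $ h i" by (simp add: w_def gh[OF i])
      thus "Matrix.vec_index v i = Matrix.vec_index (0\<^sub>v ?n) i" using w0 i by simp
    qed (use vc in simp)
    with vnz show False by simp
  qed
  ultimately show ?thesis by blast
qed

lemma eig_vec_to_J:
  fixes X :: "real^'n::finite^'n"
  assumes h: "bij_betw h {0..<CARD('n)} UNIV"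
    and w: "w \<noteq> 0" "cplx X *v w = l *s w"
  shows "eigenvalue (toJ h X) l"
proof -
  let ?n = "CARD('n)"
  define v where "v = Matrix.vec ?n (\<lambda>i. w $ h i)"
  have vc: "v \<in> carrier_vec ?n" by (simp add: v_def)
  have "toJ h X *\<^sub>v v = l \<cdot>\<^sub>v v"
  proof (rule eq_vecI)
    fix i assume "i < dim_vec (l \<cdot>\<^sub>v v)"
    hence i: "i < ?n" by (simp add: v_def)
    have "Matrix.vec_index (toJ h X *\<^sub>v v) i = (\<Sum>k\<in>{0..<?n}. complex_of_real (X $ h i $ h k) * w $ h k)"
      using i by (simp add: toJ_def scalar_prod_def v_def)
    also have "\<dots> = (\<Sum>y\<in>UNIV. complex_of_real (X $ h i $ y) * w $ y)"
      by (rule sum.reindex_bij_betw[OF h])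
    also have "\<dots> = (cplx X *v w) $ h i"
      by (simp add: cplx_def matrix_vector_mult_def)
    also have "\<dots> = l * w $ h i" using w by simp
    finally show "Matrix.vec_index (toJ h X *\<^sub>v v) i = Matrix.vec_index (l \<cdot>\<^sub>v v) i"
      using i by (simp add: v_def)
  qed (simp add: toJ_def v_def)
  moreover have "v \<noteq> 0\<^sub>v ?n"
  proof
    assume v0: "v = 0\<^sub>v ?n"
    have "w = 0"
    proof (subst Finite_Cartesian_Product.vec_eq_iff, intro allI)
      fix u
      obtain i where i: "i < ?n" "h i = u" using h unfolding bij_betw_def by (metis UNIV_I atLeastLessThan_iff imageE)
      have "w $ u = Matrix.vec_index v i" using i by (simp add: v_def)
      thus "w $ u = 0 $ u" using v0 i by simp
    qed
    with w show False by simp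
  qed
  ultimately show ?thesis unfolding eigenvalue_def eigenvector_def using vc
    by (auto simp: toJ_def)
qed

lemma matpow_scale: "matpow (c *\<^sub>R A) k = c^k *\<^sub>R matpow (A::real^'n::finite^'n) k"
proof (induction k)
  case 0 thus ?case by (simp add: matpow_def)
next
  case (Suc k)
  have "matpow (c *\<^sub>R A) (Suc k) = (c *\<^sub>R A) ** matpow (c *\<^sub>R A) k" by (simp add: matpow_def)
  also have "\<dots> = (c *\<^sub>R A) ** (c^k *\<^sub>R matpow A k)" using Suc by simp
  also have "\<dots> = c^Suc k *\<^sub>R (A ** matpow A k)"
    by (simp add: matrix_matrix_mult_def Finite_Cartesian_Product.vec_eq_iff sum_distrib_left mult_ac)
  also have "A ** matpow A k = matpow A (Suc k)" by (simp add: matpow_def)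
  finally show ?case .
qed

lemma spec_decay:
  fixes B :: "real^'n::finite^'n"
  assumes sr: "spectral_radius B < 1"
  shows "\<exists>c q. 0 < q \<and> q < 1 \<and> (\<forall>k i j. \<bar>matpow B k $ i $ j\<bar> \<le> c * q^k)"
proof -
  let ?n = "CARD('n)"
  obtain h where h: "bij_betw h {0..<?n} (UNIV::'n set)"
    using ex_bij_betw_nat_finite[of "UNIV::'n set"] by auto
  define S where "S = {cmod l | l. \<exists>v::complex^'n. v \<noteq> 0 \<and>
            (\<chi> i j. complex_of_real (B$i$j)) *v v = l *s v}"
  have cp0: "char_poly (toJ h B) \<noteq> 0"
    using degree_monic_char_poly[OF toJ_carrier[of h B]] by auto
  have "S \<subseteq> cmod ` {l. poly (char_poly (toJ h B)) l = 0}"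
  proof
    fix x assume "x \<in> S"
    then obtain l v where x: "x = cmod l" and v: "v \<noteq> 0" "cplx B *v v = l *s v"
      unfolding S_def cplx_def by auto
    have "eigenvalue (toJ h B) l" by (rule eig_vec_to_J[OF h v])
    hence "poly (char_poly (toJ h B)) l = 0"
      using eigenvalue_root_char_poly[OF toJ_carrier] by auto
    thus "x \<in> cmod ` {l. poly (char_poly (toJ h B)) l = 0}" using x by auto
  qed
  moreover have "finite {l. poly (char_poly (toJ h B)) l = 0}"
    by (rule poly_roots_finite[OF cp0])
  ultimately have finS: "finite S" by (meson finite_imageI finite_subset)
  define \<rho> where "\<rho> = spectral_radius B"
  have leS: "x \<in> S \<Longrightarrow> x \<le> \<rho>" for x
    using finS unfolding \<rho>_def spectral_radius_def S_def[symmetric] by simp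
  define q where "q = max (1/2) ((1+\<rho>)/2)"
  have q: "0 < q" "q < 1" "\<rho> < q" using sr unfolding q_def \<rho>_def by (auto simp: max_def)
  define C where "C = (1/q) *\<^sub>R B"
  have evC: "cmod ev < 1" if "eigenvalue (toJ h C) ev" for ev
  proof -
    from that obtain v where "eigenvector (toJ h C) v ev" unfolding eigenvalue_def by auto
    from eig_J_to_vec[OF h this] obtain w where w: "w \<noteq> 0" "cplx C *v w = ev *s w" by auto
    have "cplx B *v w = complex_of_real q *s (cplx C *v w)"
      using q(1) by (simp add: Finite_Cartesian_Product.vec_eq_iff cplx_def C_def matrix_vector_mult_def
          sum_distrib_left mult_ac)
    also have "\<dots> = (complex_of_real q * ev) *s w" using w(2) by simp
    finally have "cmod (complex_of_real q * ev) \<in> S" unfolding S_def cplx_def using w(1) by blast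
    hence "cmod (complex_of_real q * ev) \<le> \<rho>" by (rule leS)
    hence "q * cmod ev \<le> \<rho>" using q by (simp add: norm_mult)
    hence "q * cmod ev < q * 1" using q by linarith
    thus ?thesis using q(1) by (simp only: mult_less_cancel_left_pos)
  qed
  obtain as where as: "char_poly (toJ h C) = (\<Prod>a\<leftarrow>as. [:- a, 1:])"
    using char_poly_factorized[OF toJ_carrier[of h C]] by auto
  have "\<exists>c1 c2. \<forall>k. norm_bound (toJ h C ^\<^sub>m k) (c1 + c2 * of_nat k ^ (0 - 1))"
  proof (rule factored_char_poly_norm_bound[OF toJ_carrier as jordan_nf_exists[OF toJ_carrier as]])
    fix a assume "a \<in> set as"
    hence "poly (char_poly (toJ h C)) a = 0" unfolding as by (rule linear_poly_root)
    hence "eigenvalue (toJ h C) a" using eigenvalue_root_char_poly[OF toJ_carrier] by auto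
    hence "cmod a < 1" by (rule evC)
    thus "norm a \<le> 1" by simp
    show "norm a = 1 \<Longrightarrow> length (filter ((=) a) as) \<le> 0" using \<open>cmod a < 1\<close> by simp
  qed
  then obtain c1 c2 where cb: "\<And>k. norm_bound (toJ h C ^\<^sub>m k) (c1 + c2)" by auto
  have "\<bar>matpow B k $ i $ j\<bar> \<le> (c1 + c2) * q^k" for k i j
  proof -
    obtain i' where i': "i' < ?n" "h i' = i" using h unfolding bij_betw_def
      by (metis UNIV_I atLeastLessThan_iff imageE)
    obtain j' where j': "j' < ?n" "h j' = j" using h unfolding bij_betw_def
      by (metis UNIV_I atLeastLessThan_iff imageE)
    have "norm (toJ h (matpow C k) $$ (i', j')) \<le> c1 + c2"
      using cb[of k] i' j' unfolding toJ_pow[OF h] norm_bound_def by (auto simp: toJ_def)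
    hence "\<bar>matpow C k $ i $ j\<bar> \<le> c1 + c2" using i' j' by (simp add: toJ_def)
    hence "\<bar>(1/q)^k * matpow B k $ i $ j\<bar> \<le> c1 + c2" unfolding C_def matpow_scale by simp
    hence "\<bar>matpow B k $ i $ j\<bar> / q^k \<le> c1 + c2" using q(1) by (simp add: abs_mult power_divide)
    thus ?thesis using q(1) by (simp add: divide_le_eq)
  qed
  thus ?thesis using q by blast
qed

lemma neumann:
  fixes B :: "real^'n::finite^'n"
  assumes sr: "spectral_radius B < 1"
  shows "invertible (mat 1 - B)"
    and "\<And>i j. (\<lambda>t. matpow B t $ i $ j) sums (matrix_inv (mat 1 - B) $ i $ j)"
proof -
  obtain c q where q: "0 < q" "q < 1" and b: "\<And>k i j. \<bar>matpow B k $ i $ j\<bar> \<le> c * q^k"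
    using spec_decay[OF sr] by blast
  have summ: "summable (\<lambda>t. matpow B t $ i $ j)" for i j
  proof (rule summable_comparison_test)
    show "\<exists>N. \<forall>n\<ge>N. norm (matpow B n $ i $ j) \<le> c * q^n" using b by auto
    show "summable (\<lambda>n. c * q^n)" using q by (intro summable_mult summable_geometric) simp
  qed
  define M where "M = (\<chi> i j. \<Sum>t. matpow B t $ i $ j)"
  have MB: "(mat 1 - B) ** M = mat 1"
  proof (subst Finite_Cartesian_Product.vec_eq_iff, intro allI, subst Finite_Cartesian_Product.vec_eq_iff, intro allI)
    fix i j
    have step: "(\<Sum>k\<in>UNIV. (mat 1 - B) $ i $ k * matpow B t $ k $ j) = matpow B t $ i $ j - matpow B (Suc t) $ i $ j" for t
    proof -
      have "(\<Sum>k\<in>UNIV. (mat 1 - B) $ i $ k * matpow B t $ k $ j)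
          = (\<Sum>k\<in>UNIV. (mat 1::real^'n^'n) $ i $ k * matpow B t $ k $ j) - (\<Sum>k\<in>UNIV. B $ i $ k * matpow B t $ k $ j)"
        by (simp add: left_diff_distrib sum_subtractf)
      also have "(\<Sum>k\<in>UNIV. (mat 1::real^'n^'n) $ i $ k * matpow B t $ k $ j) = matpow B t $ i $ j"
      proof -
        have "(mat 1 ** matpow B t) $ i $ j = matpow B t $ i $ j" by (simp only: matrix_mul_lid)
        thus ?thesis by (simp add: matrix_matrix_mult_def)
      qed
      also have "(\<Sum>k\<in>UNIV. B $ i $ k * matpow B t $ k $ j) = matpow B (Suc t) $ i $ j"
        by (simp add: matpow_def matrix_matrix_mult_def)
      finally show ?thesis .
    qed
    have lim0: "(\<lambda>t. matpow B t $ i $ j) \<longlonglongrightarrow> 0" by (rule summable_LIMSEQ_zero[OF summ])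
    have "(\<lambda>t. matpow B t $ i $ j - matpow B (Suc t) $ i $ j) sums (matpow B 0 $ i $ j - 0)"
      by (rule telescope_sums'[OF lim0])
    moreover have "(\<lambda>t. \<Sum>k\<in>UNIV. (mat 1 - B) $ i $ k * matpow B t $ k $ j)
       = (\<lambda>t. matpow B t $ i $ j - matpow B (Suc t) $ i $ j)" using step by (rule ext)
    moreover have "matpow B 0 = mat 1" by (simp add: matpow_def)
    ultimately have s1: "(\<lambda>t. \<Sum>k\<in>UNIV. (mat 1 - B) $ i $ k * matpow B t $ k $ j) sums ((mat 1::real^'n^'n) $ i $ j)"
      by simp
    have "((mat 1 - B) ** M) $ i $ j = (\<Sum>k\<in>UNIV. (mat 1 - B) $ i $ k * (\<Sum>t. matpow B t $ k $ j))"
      by (simp add: M_def matrix_matrix_mult_def)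
    also have "\<dots> = (\<Sum>k\<in>UNIV. \<Sum>t. (mat 1 - B) $ i $ k * matpow B t $ k $ j)"
      by (intro sum.cong refl suminf_mult[symmetric] summ)
    also have "\<dots> = (\<Sum>t. \<Sum>k\<in>UNIV. (mat 1 - B) $ i $ k * matpow B t $ k $ j)"
      by (rule suminf_sum[symmetric]) (intro summable_mult summ)
    also have "\<dots> = (mat 1::real^'n^'n) $ i $ j" using s1 by (rule sums_unique[symmetric])
    finally show "((mat 1 - B) ** M) $ i $ j = (mat 1::real^'n^'n) $ i $ j" .
  qed
  have BM: "M ** (mat 1 - B) = mat 1" using MB matrix_left_right_inverse by blast
  show inv: "invertible (mat 1 - B)" unfolding invertible_def using MB BM by blast
  have "matrix_inv (mat 1 - B) = M"
    unfolding matrix_inv_def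
  proof (rule some_equality)
    show "(mat 1 - B) ** M = mat 1 \<and> M ** (mat 1 - B) = mat 1" using MB BM by simp
    fix X assume X: "(mat 1 - B) ** X = mat 1 \<and> X ** (mat 1 - B) = mat 1"
    hence "X ** ((mat 1 - B) ** M) = (X ** (mat 1 - B)) ** M" by (simp add: matrix_mul_assoc)
    thus "X = M" using MB X matrix_left_right_inverse by (metis matrix_mul_lid matrix_mul_rid)
  qed
  thus "\<And>i j. (\<lambda>t. matpow B t $ i $ j) sums (matrix_inv (mat 1 - B) $ i $ j)"
    using summ by (simp add: M_def summable_sums)
qed



lemma inv_props:
  assumes "invertible (X::real^'n::finite^'n)"
  shows "X ** matrix_inv X = mat 1 \<and> matrix_inv X ** X = mat 1"
  using assms unfolding invertible_def matrix_inv_def by (rule someI_ex)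

lemma det_differentiable:
  fixes F :: "'p::real_normed_vector \<Rightarrow> real^'n::finite^'n"
  assumes d: "\<And>i j. (\<lambda>th. F th $ i $ j) differentiable (at \<theta>)"
  shows "(\<lambda>th. det (F th)) differentiable (at \<theta>)"
proof -
  have pd: "(\<lambda>th. \<Prod>i\<in>UNIV. F th $ i $ p i) differentiable (at \<theta>)" for p
    unfolding differentiable_def
    apply (rule exI)
    apply (rule has_derivative_prod[where f'="\<lambda>i. frechet_derivative (\<lambda>th. F th $ i $ p i) (at \<theta>)"])
    using d frechet_derivative_works by blast
  show ?thesis unfolding Determinants.det_def
    apply (rule differentiable_sum)
     apply (simp add: finite_permutations)
    apply (intro ballI differentiable_mult[OF differentiable_const pd])
    done
qed

theorem theorem4:
  fixes P :: "'s::finite \<Rightarrow> 'a::finite \<Rightarrow> 's \<Rightarrow> real"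
    and r :: "'s \<Rightarrow> 'a \<Rightarrow> real"
    and \<gamma> :: real
    and Pnu :: "real^'s^'u::finite"
    and \<pi> :: "'p::euclidean_space \<Rightarrow> 's \<Rightarrow> 'a \<Rightarrow> real"
    and \<theta> :: 'p
    and u :: 'u
  assumes P_nonneg: "\<And>s a s'. P s a s' \<ge> 0"
    and P_sum: "\<And>s a. (\<Sum>s'\<in>UNIV. P s a s') = 1"
    and gamma: "0 < \<gamma>" "\<gamma> < 1"
    and nu_nonneg: "\<And>x s. Pnu $ x $ s \<ge> 0"
    and nu_sum: "\<And>x. (\<Sum>s\<in>UNIV. Pnu $ x $ s) = 1"
    and full_rank: "rank Pnu = CARD('u)"
    and pi_pos: "\<And>th s a. \<pi> th s a > 0"
    and pi_sum: "\<And>th s. (\<Sum>a\<in>UNIV. \<pi> th s a) = 1"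
    and pi_diff: "\<And>th s a. (\<lambda>th'. \<pi> th' s a) differentiable (at th)"
    and spec: "\<And>th. spectral_radius (\<gamma> *\<^sub>R PU Pnu P (\<pi> th)) < 1"
  shows "((\<lambda>th. VU \<gamma> Pnu P r (\<pi> th) $ u) has_derivative
           (\<lambda>h. \<Sum>x\<in>UNIV. eta \<gamma> (PU Pnu P (\<pi> \<theta>)) x u *
                  (\<Sum>s\<in>UNIV. Pnu $ x $ s *
                    (\<Sum>a\<in>UNIV. \<pi> \<theta> s a *
                       frechet_derivative (\<lambda>th. ln (\<pi> th s a)) (at \<theta>) h *
                       (r s a + \<gamma> * (\<Sum>u'\<in>UNIV. P1 Pnu P u' s a * VU \<gamma> Pnu P r (\<pi> \<theta>) $ u'))))))
         (at \<theta>)"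
proof -
  define A where "A th = PU Pnu P (\<pi> th)" for th
  define V where "V th = VU \<gamma> Pnu P r (\<pi> th)" for th
  define bv where "bv th = Pnu *v RS r (\<pi> th)" for th
  define d\<pi> where "d\<pi> s a = frechet_derivative (\<lambda>th. \<pi> th s a) (at \<theta>)" for s a
  have h\<pi>: "((\<lambda>th. \<pi> th s a) has_derivative d\<pi> s a) (at \<theta>)" for s a
    using pi_diff frechet_derivative_works unfolding d\<pi>_def by blast
  have Aeq: "A th $ x $ j = (\<Sum>s\<in>UNIV. Pnu$x$s * (\<Sum>a\<in>UNIV. \<pi> th s a * P1 Pnu P j s a))" for th x j
  proof -
    have "A th $ x $ j = (\<Sum>s'\<in>UNIV. \<Sum>s\<in>UNIV. \<Sum>a\<in>UNIV. Pnu$x$s * \<pi> th s a * P s a s' * pinv Pnu $ s' $ j)"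
      by (simp add: A_def PU_def PS_def matrix_matrix_mult_def sum_distrib_left sum_distrib_right mult_ac)
    also have "\<dots> = (\<Sum>s\<in>UNIV. \<Sum>s'\<in>UNIV. \<Sum>a\<in>UNIV. Pnu$x$s * \<pi> th s a * P s a s' * pinv Pnu $ s' $ j)"
      by (rule sum.swap)
    also have "\<dots> = (\<Sum>s\<in>UNIV. \<Sum>a\<in>UNIV. \<Sum>s'\<in>UNIV. Pnu$x$s * \<pi> th s a * P s a s' * pinv Pnu $ s' $ j)"
      by (rule sum.cong[OF refl], rule sum.swap)
    also have "\<dots> = (\<Sum>s\<in>UNIV. Pnu$x$s * (\<Sum>a\<in>UNIV. \<pi> th s a * P1 Pnu P j s a))"
      by (simp add: P1_def sum_distrib_left mult_ac)
    finally show ?thesis .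
  qed
  have beq: "bv th $ x = (\<Sum>s\<in>UNIV. Pnu$x$s * (\<Sum>a\<in>UNIV. \<pi> th s a * r s a))" for th x
    by (simp add: bv_def RS_def matrix_vector_mult_def)
  define dA where "dA x j h = (\<Sum>s\<in>UNIV. Pnu$x$s * (\<Sum>a\<in>UNIV. d\<pi> s a h * P1 Pnu P j s a))" for x j h
  define db where "db x h = (\<Sum>s\<in>UNIV. Pnu$x$s * (\<Sum>a\<in>UNIV. d\<pi> s a h * r s a))" for x h
  have hA: "((\<lambda>th. A th $ x $ j) has_derivative dA x j) (at \<theta>)" for x j
    unfolding Aeq dA_def[abs_def]
    by (intro has_derivative_sum has_derivative_mult_right has_derivative_mult_left h\<pi>)
  have hb: "((\<lambda>th. bv th $ x) has_derivative db x) (at \<theta>)" for x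
    unfolding beq db_def[abs_def]
    by (intro has_derivative_sum has_derivative_mult_right has_derivative_mult_left h\<pi>)
  have invt: "invertible (mat 1 - \<gamma> *\<^sub>R A th)" for th
    using neumann(1)[OF spec[of th]] unfolding A_def .
  have Vsol: "(mat 1 - \<gamma> *\<^sub>R A th) *v V th = bv th" for th
  proof -
    have "V th = matrix_inv (mat 1 - \<gamma> *\<^sub>R A th) *v bv th"
      by (simp add: V_def VU_def A_def bv_def)
    hence "(mat 1 - \<gamma> *\<^sub>R A th) *v V th = ((mat 1 - \<gamma> *\<^sub>R A th) ** matrix_inv (mat 1 - \<gamma> *\<^sub>R A th)) *v bv th"
      by (simp add: matrix_vector_mul_assoc)
    thus ?thesis using inv_props[OF invt[of th]] by simp
  qed
  have Vid: "V th $ i = bv th $ i + \<gamma> * (\<Sum>j\<in>UNIV. A th $ i $ j * V th $ j)" for th i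
  proof -
    have "V th - \<gamma> *\<^sub>R (A th *v V th) = bv th" using Vsol[of th]
      by (simp add: matrix_vector_mult_diff_rdistrib scaleR_matrix_vector_assoc)
    hence "V th = bv th + \<gamma> *\<^sub>R (A th *v V th)" by (simp add: algebra_simps)
    hence "V th $ i = (bv th + \<gamma> *\<^sub>R (A th *v V th)) $ i" by (rule arg_cong)
    thus ?thesis by (simp only: vector_add_component vector_scaleR_component matrix_vector_mult_def
          vec_lambda_beta real_scaleR_def)
  qed
  have Vdiff: "(\<lambda>th. V th $ j) differentiable (at \<theta>)" for j
  proof -
    define G where "G th = mat 1 - \<gamma> *\<^sub>R A th" for th
    define F where "F th = (\<chi> i j'. if j' = j then bv th $ i else G th $ i $ j')" for th
    have dnz: "det (G th) \<noteq> 0" for th using invt[of th] invertible_det_nz unfolding G_def by blast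
    have "V th = (\<chi> k. det(\<chi> i j. if j=k then bv th $ i else G th $ i $ j) / det (G th))" for th
      using cramer[OF dnz[of th], of "V th" "bv th"] Vsol[of th] unfolding G_def by blast
    hence Veq: "(\<lambda>th. V th $ j) = (\<lambda>th. det (F th) / det (G th))" unfolding F_def by (intro ext) simp
    have Gd: "(\<lambda>th. G th $ i $ j') differentiable (at \<theta>)" for i j'
    proof -
      have "(\<lambda>th. G th $ i $ j') = (\<lambda>th. (mat 1::real^'u^'u) $ i $ j' - \<gamma> * A th $ i $ j')"
        by (simp add: G_def)
      thus ?thesis using differentiable_diff[OF differentiable_const differentiable_mult[OF differentiable_const differentiableI[OF hA]]]
        by simp
    qed
    have Fd: "(\<lambda>th. F th $ i $ j') differentiable (at \<theta>)" for i j'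
      using Gd differentiableI[OF hb] by (cases "j' = j") (simp_all add: F_def)
    show ?thesis unfolding Veq
      by (rule differentiable_divide[OF det_differentiable[OF Fd] det_differentiable[OF Gd] dnz])
  qed
  define D where "D j = frechet_derivative (\<lambda>th. V th $ j) (at \<theta>)" for j
  have hV: "((\<lambda>th. V th $ j) has_derivative D j) (at \<theta>)" for j
    using Vdiff frechet_derivative_works unfolding D_def by blast
  have Dform: "D i h = db i h + \<gamma> * (\<Sum>j\<in>UNIV. A \<theta> $ i $ j * D j h + dA i j h * V \<theta> $ j)" for i h
  proof -
    have "((\<lambda>th. bv th $ i + \<gamma> * (\<Sum>j\<in>UNIV. A th $ i $ j * V th $ j)) has_derivative
        (\<lambda>h. db i h + \<gamma> * (\<Sum>j\<in>UNIV. A \<theta> $ i $ j * D j h + dA i j h * V \<theta> $ j))) (at \<theta>)"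
      by (intro has_derivative_add has_derivative_mult_right has_derivative_sum has_derivative_mult hb hA hV)
    moreover have "(\<lambda>th. bv th $ i + \<gamma> * (\<Sum>j\<in>UNIV. A th $ i $ j * V th $ j)) = (\<lambda>th. V th $ i)"
      by (intro ext) (rule Vid[symmetric])
    ultimately have "((\<lambda>th. V th $ i) has_derivative
        (\<lambda>h. db i h + \<gamma> * (\<Sum>j\<in>UNIV. A \<theta> $ i $ j * D j h + dA i j h * V \<theta> $ j))) (at \<theta>)" by simp
    from has_derivative_unique[OF hV this] show ?thesis by (rule fun_cong)
  qed
  define M where "M = matrix_inv (mat 1 - \<gamma> *\<^sub>R A \<theta>)"
  define w where "w h = (\<chi> i. db i h + \<gamma> * (\<Sum>j\<in>UNIV. dA i j h * V \<theta> $ j))" for h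
  have Dsol: "D u h = (\<Sum>x\<in>UNIV. M $ u $ x * w h $ x)" for h
  proof -
    define d where "d = (\<chi> j. D j h)"
    have "(mat 1 - \<gamma> *\<^sub>R A \<theta>) *v d = w h"
    proof (subst Finite_Cartesian_Product.vec_eq_iff, intro allI)
      fix i
      have e1: "((mat 1 - \<gamma> *\<^sub>R A \<theta>) *v d) $ i = D i h - \<gamma> * (\<Sum>j\<in>UNIV. A \<theta> $ i $ j * D j h)"
      proof -
        have "(mat 1 - \<gamma> *\<^sub>R A \<theta>) *v d = d - \<gamma> *\<^sub>R (A \<theta> *v d)"
          by (simp add: matrix_vector_mult_diff_rdistrib scaleR_matrix_vector_assoc)
        hence "((mat 1 - \<gamma> *\<^sub>R A \<theta>) *v d) $ i = (d - \<gamma> *\<^sub>R (A \<theta> *v d)) $ i" by simp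
        thus ?thesis by (simp add: matrix_vector_mult_def d_def)
      qed
      have e2: "D i h = db i h + \<gamma> * ((\<Sum>j\<in>UNIV. A \<theta> $ i $ j * D j h) + (\<Sum>j\<in>UNIV. dA i j h * V \<theta> $ j))"
        using Dform[of i h] by (simp only: sum.distrib)
      have e3: "w h $ i = db i h + \<gamma> * (\<Sum>j\<in>UNIV. dA i j h * V \<theta> $ j)" by (simp add: w_def)
      show "((mat 1 - \<gamma> *\<^sub>R A \<theta>) *v d) $ i = w h $ i" unfolding e1 e3
        using e2 by (simp add: algebra_simps)
    qed
    hence "M *v ((mat 1 - \<gamma> *\<^sub>R A \<theta>) *v d) = M *v w h" by simp
    hence "d = M *v w h" using inv_props[OF invt[of \<theta>]]
      by (simp add: matrix_vector_mul_assoc M_def)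
    hence "d $ u = (M *v w h) $ u" by simp
    thus ?thesis by (simp add: d_def matrix_vector_mult_def)
  qed
  have etaM: "eta \<gamma> (PU Pnu P (\<pi> \<theta>)) x u = M $ u $ x" for x
  proof -
    have "(\<lambda>t. matpow (\<gamma> *\<^sub>R A \<theta>) t $ u $ x) sums (M $ u $ x)"
      using neumann(2)[OF spec[of \<theta>]] unfolding M_def A_def by blast
    moreover have "(\<lambda>t. matpow (\<gamma> *\<^sub>R A \<theta>) t $ u $ x) = (\<lambda>t. \<gamma>^t * matpow (A \<theta>) t $ u $ x)"
      by (simp add: matpow_scale)
    ultimately show ?thesis unfolding eta_def A_def by (simp add: sums_iff)
  qed
  have wT: "w h $ x = (\<Sum>s\<in>UNIV. Pnu $ x $ s *
                    (\<Sum>a\<in>UNIV. \<pi> \<theta> s a *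
                       frechet_derivative (\<lambda>th. ln (\<pi> th s a)) (at \<theta>) h *
                       (r s a + \<gamma> * (\<Sum>u'\<in>UNIV. P1 Pnu P u' s a * VU \<gamma> Pnu P r (\<pi> \<theta>) $ u'))))" for h x
  proof -
    have dln: "\<pi> \<theta> s a * frechet_derivative (\<lambda>th. ln (\<pi> th s a)) (at \<theta>) h = d\<pi> s a h" for s a
    proof -
      have "((\<lambda>th. ln (\<pi> th s a)) has_derivative (\<lambda>h. d\<pi> s a h * inverse (\<pi> \<theta> s a))) (at \<theta>)"
        by (rule has_derivative_ln[OF pi_pos h\<pi>])
      hence "frechet_derivative (\<lambda>th. ln (\<pi> th s a)) (at \<theta>) = (\<lambda>h. d\<pi> s a h * inverse (\<pi> \<theta> s a))"
        by (rule frechet_derivative_at[symmetric])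
      thus ?thesis using pi_pos[of \<theta> s a] by simp
    qed
    have sw: "(\<Sum>j\<in>UNIV. dA x j h * V \<theta> $ j) =
        (\<Sum>s\<in>UNIV. Pnu $ x $ s * (\<Sum>a\<in>UNIV. d\<pi> s a h * (\<Sum>j\<in>UNIV. P1 Pnu P j s a * V \<theta> $ j)))"
    proof -
      have "(\<Sum>j\<in>UNIV. dA x j h * V \<theta> $ j) = (\<Sum>j\<in>UNIV. \<Sum>s\<in>UNIV. \<Sum>a\<in>UNIV. Pnu $ x $ s * d\<pi> s a h * P1 Pnu P j s a * V \<theta> $ j)"
        by (simp add: dA_def sum_distrib_left sum_distrib_right mult_ac)
      also have "\<dots> = (\<Sum>s\<in>UNIV. \<Sum>j\<in>UNIV. \<Sum>a\<in>UNIV. Pnu $ x $ s * d\<pi> s a h * P1 Pnu P j s a * V \<theta> $ j)"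
        by (rule sum.swap)
      also have "\<dots> = (\<Sum>s\<in>UNIV. \<Sum>a\<in>UNIV. \<Sum>j\<in>UNIV. Pnu $ x $ s * d\<pi> s a h * P1 Pnu P j s a * V \<theta> $ j)"
        by (rule sum.cong[OF refl], rule sum.swap)
      also have "\<dots> = (\<Sum>s\<in>UNIV. Pnu $ x $ s * (\<Sum>a\<in>UNIV. d\<pi> s a h * (\<Sum>j\<in>UNIV. P1 Pnu P j s a * V \<theta> $ j)))"
        by (simp add: sum_distrib_left mult_ac)
      finally show ?thesis .
    qed
    have "w h $ x = db x h + \<gamma> * (\<Sum>s\<in>UNIV. Pnu $ x $ s * (\<Sum>a\<in>UNIV. d\<pi> s a h * (\<Sum>j\<in>UNIV. P1 Pnu P j s a * V \<theta> $ j)))"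
      by (simp add: w_def sw)
    also have "\<dots> = (\<Sum>s\<in>UNIV. Pnu $ x $ s * (\<Sum>a\<in>UNIV. d\<pi> s a h * (r s a + \<gamma> * (\<Sum>j\<in>UNIV. P1 Pnu P j s a * V \<theta> $ j))))"
      by (simp add: db_def sum_distrib_left distrib_left sum.distrib mult_ac)
    also have "\<dots> = (\<Sum>s\<in>UNIV. Pnu $ x $ s *
                    (\<Sum>a\<in>UNIV. \<pi> \<theta> s a *
                       frechet_derivative (\<lambda>th. ln (\<pi> th s a)) (at \<theta>) h *
                       (r s a + \<gamma> * (\<Sum>u'\<in>UNIV. P1 Pnu P u' s a * VU \<gamma> Pnu P r (\<pi> \<theta>) $ u'))))"
      by (simp add: dln V_def)
    finally show ?thesis .
  qed
  have "D u = (\<lambda>h. \<Sum>x\<in>UNIV. eta \<gamma> (PU Pnu P (\<pi> \<theta>)) x u *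
                  (\<Sum>s\<in>UNIV. Pnu $ x $ s *
                    (\<Sum>a\<in>UNIV. \<pi> \<theta> s a *
                       frechet_derivative (\<lambda>th. ln (\<pi> th s a)) (at \<theta>) h *
                       (r s a + \<gamma> * (\<Sum>u'\<in>UNIV. P1 Pnu P u' s a * VU \<gamma> Pnu P r (\<pi> \<theta>) $ u')))))"
    by (intro ext) (simp add: Dsol etaM wT)
  with hV[of u] show ?thesis unfolding V_def by simp
qed

end
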